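(* Let $n\ge2$ and let $(x,y,z)$ be a $C^1$ solution of \[\dot x=nx^2+z^2,\quad \dot y=(n+1)z^2,\quad \dot z=\tfrac{n+1}{n}z\big((n-1)x+y\big),\qquad (x,y,z)(0)=(x_0,y_0,z_0)\in\mathbb R^3_{>0},\] on $[0,T)$, where $T$ is the maximal time of existence. Then $T\leq\big((n+1)\min\{x_0,y_0,z_0\}\big)^{-1}<\infty$, and \[x,y,z\geq\frac{1}{\min\{x_0,y_0,z_0\}^{-1}-(n+1)t}\qquad\text{for all }t\in[0,T).\] *)

theory Defs
  imports "HOL-Analysis.Analysis" "HOL-Library.Extended_Real"
begin

definition time_dom :: "ereal \<Rightarrow> real set" where
  "time_dom T = {t. 0 \<le> t \<and> ereal t < T}"

text \<open>(x,y,z) is a C^1 solution of the ODE system on [0,T) with given initial data.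
  Derivatives are taken within [0,T) (one-sided at 0); the continuity of the derivatives
  (C^1) is included explicitly.\<close>
definition is_solution ::
  "nat \<Rightarrow> real \<Rightarrow> real \<Rightarrow> real \<Rightarrow> ereal \<Rightarrow> (real \<Rightarrow> real) \<Rightarrow> (real \<Rightarrow> real) \<Rightarrow> (real \<Rightarrow> real) \<Rightarrow> bool" where
  "is_solution n x0 y0 z0 T x y z \<longleftrightarrow>
     T > 0 \<and> x 0 = x0 \<and> y 0 = y0 \<and> z 0 = z0 \<and>
     continuous_on (time_dom T) (\<lambda>t. real n * (x t)^2 + (z t)^2) \<and>
     continuous_on (time_dom T) (\<lambda>t. (real n + 1) * (z t)^2) \<and>
     continuous_on (time_dom T) (\<lambda>t. (real n + 1) / real n * z t * ((real n - 1) * x t + y t)) \<and>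
     (\<forall>t \<in> time_dom T.
        (x has_real_derivative (real n * (x t)^2 + (z t)^2)) (at t within time_dom T) \<and>
        (y has_real_derivative ((real n + 1) * (z t)^2)) (at t within time_dom T) \<and>
        (z has_real_derivative ((real n + 1) / real n * z t * ((real n - 1) * x t + y t)))
           (at t within time_dom T))"

definition is_maximal_solution ::
  "nat \<Rightarrow> real \<Rightarrow> real \<Rightarrow> real \<Rightarrow> ereal \<Rightarrow> (real \<Rightarrow> real) \<Rightarrow> (real \<Rightarrow> real) \<Rightarrow> (real \<Rightarrow> real) \<Rightarrow> bool" where
  "is_maximal_solution n x0 y0 z0 T x y z \<longleftrightarrow>
     is_solution n x0 y0 z0 T x y z \<and>
     \<not> (\<exists>T' x' y' z'. T' > T \<and> is_solution n x0 y0 z0 T' x' y' z' \<and>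
          (\<forall>t \<in> time_dom T. x' t = x t \<and> y' t = y t \<and> z' t = z t))"

end

theory Submission
  imports Defs
begin

lemma touch:
  fixes f g :: "real \<Rightarrow> real" and D :: "real set"
  assumes "(f has_real_derivative f') (at t1 within D)"
    and "(g has_real_derivative g') (at t1 within D)"
    and "f' > g'" and "f t1 \<le> g t1" and "t1 > 0"
    and "\<And>s. 0 \<le> s \<Longrightarrow> s < t1 \<Longrightarrow> s \<in> D \<and> f s > g s"
  shows False
proof -
  have "((\<lambda>s. f s - g s) has_real_derivative (f' - g')) (at t1 within D)"
    using assms(1,2) by (rule derivative_intros)
  from has_real_derivative_pos_inc_left[OF this] assms(3)
  obtain d where d: "d > 0" "\<And>h. h > 0 \<Longrightarrow> t1 - h \<in> D \<Longrightarrow> h < d \<Longrightarrow> f (t1 - h) - g (t1 - h) < f t1 - g t1"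
    by auto
  define h where "h = min (d/2) (t1/2)"
  have h: "h > 0" "h < d" "h \<le> t1/2" using d assms(5) by (auto simp: h_def)
  have "t1 - h \<in> D \<and> f (t1 - h) > g (t1 - h)" using assms(6)[of "t1 - h"] h by auto
  with d(2)[OF h(1) _ h(2)] assms(4) show False by auto
qed

lemma limit_arg:
  fixes X d t L :: real
  assumes "d > 0" "t \<ge> 0" "L > 0"
    and H: "\<And>e. 0 < e \<Longrightarrow> e < L \<Longrightarrow> X > 1 / (d + e * (1 + t))"
  shows "X \<ge> 1 / d"
proof (rule ccontr)
  assume "\<not> X \<ge> 1 / d"
  then have Xd: "X * d < 1" using assms(1) by (simp add: not_le less_divide_eq)
  show False
  proof (cases "X > 0")
    case False
    have "X > 1 / (d + L/2 * (1 + t))" using H[of "L/2"] assms by auto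
    moreover have "d + L/2 * (1 + t) > 0" using assms by (simp add: add_pos_nonneg)
    then have "1 / (d + L/2 * (1 + t)) > 0" by simp
    ultimately show False using False by linarith
  next
    case True
    define e where "e = min (L/2) ((1/X - d) / (2*(1+t)))"
    have dX: "1/X - d > 0" using Xd True by (simp add: field_simps)
    have e: "e > 0" "e < L" using assms dX by (auto simp: e_def)
    have "e \<le> (1/X - d) / (2*(1+t))" by (simp add: e_def)
    then have "e * (1+t) \<le> (1/X - d) / (2*(1+t)) * (1+t)" using assms by (intro mult_right_mono) auto
    also have "\<dots> = (1/X - d)/2" using assms by (simp add: divide_simps)
    finally have "e * (1+t) \<le> (1/X - d)/2" .
    then have "X * (d + e * (1 + t)) \<le> X * (d + (1/X - d)/2)" using True
      by (intro mult_left_mono) auto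
    also have "\<dots> = (X*d + 1)/2" using True by (simp add: field_simps)
    also have "\<dots> < 1" using Xd by simp
    moreover have "d + e * (1 + t) > 0" using assms e by (simp add: add_pos_nonneg)
    ultimately have "X \<le> 1 / (d + e * (1 + t))"
      by (simp add: le_divide_eq mult.commute)
    with H[OF e] show False by simp
  qed
qed

lemma strict_cmp:
  fixes n :: nat and x0 y0 z0 a k t :: real and T :: ereal and x y z :: "real \<Rightarrow> real"
  assumes sol: "is_solution n x0 y0 z0 T x y z" and n2: "n \<ge> 2"
    and pos: "x0 > 0" "y0 > 0" "z0 > 0"
    and a: "a > 1 / min x0 (min y0 z0)" and k: "0 < k" "k < real n + 1"
    and t: "t \<in> time_dom T" "t < (1 / min x0 (min y0 z0)) / (real n + 1)"
  shows "x t > 1 / (a - k * t) \<and> y t > 1 / (a - k * t) \<and> z t > 1 / (a - k * t)"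
proof (rule ccontr)
  assume neg: "\<not> ?thesis"
  define D where "D = time_dom T"
  define m where "m = min x0 (min y0 z0)"
  define L where "L = real n + 1"
  define w where "w s = 1 / (a - k * s)" for s
  have m: "m > 0" using pos by (auto simp: m_def)
  have L: "L \<ge> 3" using n2 by (auto simp: L_def)
  have a1: "1/m < a" using a unfolding m_def .
  have apos: "a > 0" using a1 m by (meson less_trans zero_less_divide_1_iff)
  have am1: "1 < a * m" using a1 m by (simp add: divide_less_eq)
  have am: "1 / a < m" using am1 apos by (simp add: divide_less_eq mult.commute)
  have t0: "0 \<le> t" and tT: "ereal t < T" using t(1) by (auto simp: time_dom_def)
  have tB: "t * L < 1/m"
  proof -
    have "t < (1/m)/L" using t(2) unfolding m_def L_def .
    then show ?thesis using L by (subst (asm) pos_less_divide_eq) auto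
  qed
  have den: "a - k * s > 0" if "0 \<le> s" "s \<le> t" for s
  proof -
    have "k * s \<le> L * s" using k that unfolding L_def by (intro mult_right_mono) auto
    also have "\<dots> \<le> L * t" using that L by (intro mult_left_mono) auto
    also have "\<dots> < 1/m" using tB by (simp add: mult.commute)
    also have "\<dots> < a" using a by (simp add: m_def)
    finally show ?thesis by simp
  qed
  have sub: "{0..t} \<subseteq> D" using t0 tT by (auto simp: D_def time_dom_def intro: le_less_trans[of "ereal _" "ereal t" T])
  have der: "\<And>s. s \<in> D \<Longrightarrow>
        (x has_real_derivative (real n * (x s)^2 + (z s)^2)) (at s within D) \<and>
        (y has_real_derivative ((real n + 1) * (z s)^2)) (at s within D) \<and>
        (z has_real_derivative ((real n + 1) / real n * z s * ((real n - 1) * x s + y s)))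
           (at s within D)"
    using sol unfolding is_solution_def D_def by blast
  have init: "x 0 = x0" "y 0 = y0" "z 0 = z0" using sol by (auto simp: is_solution_def)
  have cx: "continuous_on D x" "continuous_on D y" "continuous_on D z"
    using der by (auto simp: continuous_on_eq_continuous_within intro: DERIV_continuous)
  have cx': "continuous_on {0..r} x" "continuous_on {0..r} y" "continuous_on {0..r} z"
    if "r \<le> t" for r
  proof -
    have "{0..r} \<subseteq> D" using sub that by auto
    then show "continuous_on {0..r} x" "continuous_on {0..r} y" "continuous_on {0..r} z"
      using cx continuous_on_subset by blast+
  qed
  have cw: "continuous_on {0..r} w" if "r \<le> t" for r
  proof -
    have "\<forall>s\<in>{0..r}. a - k * s \<noteq> 0" using den that by (metis atLeastAtMost_iff order.trans less_irrefl)
    then show ?thesis unfolding w_def by (intro continuous_intros) auto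
  qed
  define S where "S = {s \<in> {0..t}. x s \<le> w s} \<union> {s \<in> {0..t}. y s \<le> w s} \<union> {s \<in> {0..t}. z s \<le> w s}"
  have Scl: "closed S" unfolding S_def
    using cx'[OF order_refl] cw[OF order_refl]
    by (intro closed_Un continuous_on_closed_Collect_le) auto
  have tS: "t \<in> S" using neg t0 by (auto simp: S_def w_def)
  have Sbdd: "bdd_below S" by (auto simp: S_def bdd_below_def)
  define t1 where "t1 = Inf S"
  have t1S: "t1 \<in> S" unfolding t1_def using closed_contains_Inf[OF _ Sbdd Scl] tS by auto
  have t1t: "0 \<le> t1" "t1 \<le> t" using t1S by (auto simp: S_def)
  have before: "x s > w s \<and> y s > w s \<and> z s > w s" if "0 \<le> s" "s < t1" for s
  proof -
    have "s \<notin> S" using that cInf_lower[OF _ Sbdd, of s] unfolding t1_def[symmetric] by auto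
    then show ?thesis using that t1t by (auto simp: S_def)
  qed
  have w0: "w 0 = 1/a" by (simp add: w_def)
  have t1pos: "t1 > 0"
  proof (rule ccontr)
    assume "\<not> t1 > 0" then have "t1 = 0" using t1t by auto
    with t1S have "x0 \<le> 1/a \<or> y0 \<le> 1/a \<or> z0 \<le> 1/a" by (auto simp: S_def init w0)
    then show False using am by (auto simp: m_def)
  qed
  have ge: "x t1 \<ge> w t1 \<and> y t1 \<ge> w t1 \<and> z t1 \<ge> w t1"
  proof -
    have "closure {0..<t1} \<subseteq> {s \<in> {0..t1}. w s \<le> x s}"
      using before t1t cx'[OF t1t(2)] cw[OF t1t(2)]
      by (intro closure_minimal continuous_on_closed_Collect_le) (auto intro: less_imp_le)
    moreover have "closure {0..<t1} \<subseteq> {s \<in> {0..t1}. w s \<le> y s}"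
      using before t1t cx'[OF t1t(2)] cw[OF t1t(2)]
      by (intro closure_minimal continuous_on_closed_Collect_le) (auto intro: less_imp_le)
    moreover have "closure {0..<t1} \<subseteq> {s \<in> {0..t1}. w s \<le> z s}"
      using before t1t cx'[OF t1t(2)] cw[OF t1t(2)]
      by (intro closure_minimal continuous_on_closed_Collect_le) (auto intro: less_imp_le)
    moreover have "t1 \<in> closure {0..<t1}" using t1pos by simp
    ultimately show ?thesis by blast
  qed
  have t1D: "t1 \<in> D" using sub t1t by auto
  have wpos: "w t1 > 0" using den[OF t1t] by (simp add: w_def)
  have dw: "(w has_real_derivative (k * (w t1)^2)) (at t1 within D)"
  proof -
    have "((\<lambda>s. 1 / (a - k * s)) has_real_derivative (- (- k) / (a - k * t1)^2)) (at t1 within D)"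
      using den[OF t1t] by (auto intro!: derivative_eq_intros simp: power2_eq_square)
    then show ?thesis unfolding w_def by (simp add: power2_eq_square)
  qed
  have Dsub: "s \<in> D" if "0 \<le> s" "s < t1" for s using sub that t1t by auto
  have nreal: "real n \<ge> 2" using n2 by simp
  have kw: "k * (w t1)^2 < L * (w t1)^2" using k wpos unfolding L_def by (intro mult_strict_right_mono) auto
  from t1S consider "x t1 \<le> w t1" | "y t1 \<le> w t1" | "z t1 \<le> w t1" by (auto simp: S_def)
  then show False
  proof cases
    case 1
    have eq: "x t1 = w t1" using 1 ge by auto
    have "L * (w t1)^2 \<le> real n * (x t1)^2 + (z t1)^2"
      using eq ge wpos by (auto simp: L_def algebra_simps intro!: power_mono)
    then have lt: "k * (w t1)^2 < real n * (x t1)^2 + (z t1)^2" using kw by linarith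
    show False
    proof (rule touch[of x "real n * (x t1)^2 + (z t1)^2" t1 D w "k * (w t1)^2"])
      show "(x has_real_derivative (real n * (x t1)^2 + (z t1)^2)) (at t1 within D)" using der[OF t1D] by blast
    qed (use dw lt 1 t1pos before Dsub in auto)
  next
    case 2
    have eq: "y t1 = w t1" using 2 ge by auto
    have "L * (w t1)^2 \<le> (real n + 1) * (z t1)^2"
      using eq ge wpos by (auto simp: L_def intro!: power_mono)
    then have lt: "k * (w t1)^2 < (real n + 1) * (z t1)^2" using kw by linarith
    show False
    proof (rule touch[of y "(real n + 1) * (z t1)^2" t1 D w "k * (w t1)^2"])
      show "(y has_real_derivative ((real n + 1) * (z t1)^2)) (at t1 within D)" using der[OF t1D] by blast
    qed (use dw lt 2 t1pos before Dsub in auto)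
  next
    case 3
    have eq: "z t1 = w t1" using 3 ge by auto
    have "(real n - 1) * x t1 + y t1 \<ge> (real n - 1) * w t1 + w t1"
      using ge nreal by (intro add_mono mult_left_mono) auto
    then have h: "(real n - 1) * x t1 + y t1 \<ge> real n * w t1" by (simp add: algebra_simps)
    have "L * (w t1)^2 = (real n + 1) / real n * w t1 * (real n * w t1)"
      using nreal by (simp add: L_def power2_eq_square)
    also have "\<dots> \<le> (real n + 1) / real n * w t1 * ((real n - 1) * x t1 + y t1)"
      using h wpos nreal by (intro mult_left_mono) auto
    finally have "L * (w t1)^2 \<le> (real n + 1) / real n * z t1 * ((real n - 1) * x t1 + y t1)"
      using eq by simp
    then have lt: "k * (w t1)^2 < (real n + 1) / real n * z t1 * ((real n - 1) * x t1 + y t1)" using kw by linarith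
    show False
    proof (rule touch[of z "(real n + 1) / real n * z t1 * ((real n - 1) * x t1 + y t1)" t1 D w "k * (w t1)^2"])
      show "(z has_real_derivative ((real n + 1) / real n * z t1 * ((real n - 1) * x t1 + y t1))) (at t1 within D)" using der[OF t1D] by blast
    qed (use dw lt 3 t1pos before Dsub in auto)
  qed
qed


theorem proposition3p3:
  fixes n :: nat and x0 y0 z0 :: real and T :: ereal and x y z :: "real \<Rightarrow> real"
  assumes "n \<ge> 2"
    and "x0 > 0" and "y0 > 0" and "z0 > 0"
    and "is_maximal_solution n x0 y0 z0 T x y z"
  shows "T \<le> ereal (1 / ((real n + 1) * min x0 (min y0 z0))) \<and> T < \<infinity> \<and>
         (\<forall>t \<in> time_dom T.
            x t \<ge> 1 / (1 / min x0 (min y0 z0) - (real n + 1) * t) \<and>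
            y t \<ge> 1 / (1 / min x0 (min y0 z0) - (real n + 1) * t) \<and>
            z t \<ge> 1 / (1 / min x0 (min y0 z0) - (real n + 1) * t))"
proof -
  have sol: "is_solution n x0 y0 z0 T x y z" using assms(5) by (simp add: is_maximal_solution_def)
  define m where "m = min x0 (min y0 z0)"
  define L where "L = real n + 1"
  define c where "c = 1 / m"
  have m: "m > 0" using assms by (auto simp: m_def)
  have c: "c > 0" using m by (simp add: c_def)
  have L: "L > 0" by (simp add: L_def)
  have bound: "x t \<ge> 1 / (c - L * t) \<and> y t \<ge> 1 / (c - L * t) \<and> z t \<ge> 1 / (c - L * t)"
    if t: "t \<in> time_dom T" "t < c / L" for t
  proof -
    have t0: "t \<ge> 0" using t by (simp add: time_dom_def)
    have d: "c - L * t > 0" using t(2) L by (simp add: pos_less_divide_eq mult.commute)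
    have H: "x t > 1 / ((c - L * t) + e * (1 + t)) \<and> y t > 1 / ((c - L * t) + e * (1 + t))
        \<and> z t > 1 / ((c - L * t) + e * (1 + t))"
      if e: "0 < e" "e < L" for e
    proof -
      have eq: "(c + e) - (L - e) * t = (c - L * t) + e * (1 + t)" by (simp add: algebra_simps)
      have "x t > 1 / ((c + e) - (L - e) * t) \<and> y t > 1 / ((c + e) - (L - e) * t)
          \<and> z t > 1 / ((c + e) - (L - e) * t)"
        using strict_cmp[OF sol assms(1-4), of "c + e" "L - e" t] e t
        unfolding c_def m_def L_def by auto
      then show ?thesis unfolding eq .
    qed
    show ?thesis
      using limit_arg[OF d t0 L, of "x t"] limit_arg[OF d t0 L, of "y t"]
        limit_arg[OF d t0 L, of "z t"] H by blast
  qed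
  have TB: "T \<le> ereal (c / L)"
  proof (rule ccontr)
    assume "\<not> T \<le> ereal (c / L)"
    then have TB: "ereal (c / L) < T" by simp
    have sub: "{0..c/L} \<subseteq> time_dom T"
      using TB by (auto simp: time_dom_def intro: le_less_trans[of "ereal _" "ereal (c/L)" T])
    have cx: "continuous_on (time_dom T) x"
      using sol unfolding is_solution_def
      by (auto simp: continuous_on_eq_continuous_within intro: DERIV_continuous)
    then have "continuous_on {0..c/L} x" using sub continuous_on_subset by blast
    from continuous_attains_sup[OF compact_Icc _ this] c L
    obtain s0 where "\<forall>s\<in>{0..c/L}. x s \<le> x s0" by fastforce
    define M where "M = \<bar>x s0\<bar>"
    define d where "d = c / (1 + c * M)"
    have M: "M \<ge> 0" by (simp add: M_def)
    have dpos: "d > 0" using c M by (simp add: d_def add_pos_nonneg)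
    have dc: "d \<le> c" using c M by (simp add: d_def divide_le_eq add_pos_nonneg mult_le_cancel_left1)
    have inv: "1 / d = 1 / c + M" using c M by (simp add: d_def field_simps add_pos_nonneg)
    define t where "t = (c - d) / L"
    have t0: "t \<ge> 0" using dc L by (simp add: t_def)
    have tB: "t < c / L" using dpos L by (simp add: t_def divide_strict_right_mono)
    have tD: "t \<in> time_dom T" using sub t0 tB by auto
    have ct: "c - L * t = d" using L by (simp add: t_def)
    have "x t \<ge> 1 / d" using bound[OF tD tB] ct by simp
    moreover have "x t \<le> M" using \<open>\<forall>s\<in>{0..c/L}. x s \<le> x s0\<close> t0 tB unfolding M_def
      by (meson abs_ge_self atLeastAtMost_iff less_imp_le order_trans)
    moreover have "1 / c > 0" using c by simp
    ultimately show False using inv by linarith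
  qed
  have eqB: "c / L = 1 / ((real n + 1) * min x0 (min y0 z0))" by (simp add: c_def L_def m_def)
  show ?thesis
  proof (intro conjI ballI)
    show "T \<le> ereal (1 / ((real n + 1) * min x0 (min y0 z0)))" using TB eqB by simp
    then show "T < \<infinity>" by (cases T) auto
  next
    fix t assume t: "t \<in> time_dom T"
    have "ereal t < T" using t by (simp add: time_dom_def)
    then have "ereal t < ereal (c / L)" using TB by (rule less_le_trans)
    then have "t < c / L" by simp
    from bound[OF t this] show "x t \<ge> 1 / (1 / min x0 (min y0 z0) - (real n + 1) * t)"
      "y t \<ge> 1 / (1 / min x0 (min y0 z0) - (real n + 1) * t)"
      "z t \<ge> 1 / (1 / min x0 (min y0 z0) - (real n + 1) * t)"
      by (simp_all add: c_def m_def L_def)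
  qed
qed

end
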